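(* Let $[a(n)]\in\mathbb{L}$. Then: (1) $[a(n)]\in\mathbb{B}$; (2) for every integer $m\ge2$, $[a(mn)]=[a(n)]$; (3) $\pi_{\mathbb{E}}([a(n)])=0$, i.e. $\limsup_{n\to\infty}\frac{\log a(n)}{n}=0$.
   Context: Let $\mathcal{O}$ be the set of non-decreasing sequences $a:\mathbb{N}\to[0,\infty)$, $a\approx b$ iff $c_1a(n)\le b(n)\le c_2a(n)$ for all $n$ for some constants $0<c_1\le c_2$, $\mathbb{O}=\mathcal{O}/\!\approx$ with classes $[a(n)]$. A class $[a(n)]$ has the linearly invariant property (LIP) if $[a(mn)]=[a(n)]$ for some integer $m\ge2$; $\mathbb{L}$ is the set of such classes. It has the bounded jump property if there is $C>0$ with $a(n+1)\le Ca(n)$ for all $n$; $\mathbb{B}$ is the set of such classes. For $[a(n)]\in\mathbb{O}$, $\pi_{\mathbb{E}}([a(n)])=\inf\{t>0:[a(n)]\le[e^{tn}]\}$ (with value $\infty$ if the set is empty), which equals $\limsup_{n\to\infty}\frac{\log a(n)}{n}$. *)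

theory Defs
  imports "HOL-Analysis.Analysis"
begin

text \<open>Sequences are indexed by the positive integers 1,2,3,...; values at index 0 are ignored.\<close>

definition seqO :: "(nat \<Rightarrow> real) \<Rightarrow> bool" where
  "seqO a \<longleftrightarrow> (\<forall>n\<ge>1. 0 \<le> a n) \<and> (\<forall>m n. 1 \<le> m \<longrightarrow> m \<le> n \<longrightarrow> a m \<le> a n)"

definition equivO :: "(nat \<Rightarrow> real) \<Rightarrow> (nat \<Rightarrow> real) \<Rightarrow> bool" where
  "equivO a b \<longleftrightarrow> (\<exists>c1 c2. 0 < c1 \<and> c1 \<le> c2 \<and>
      (\<forall>n\<ge>1. c1 * a n \<le> b n \<and> b n \<le> c2 * a n))"

definition leO :: "(nat \<Rightarrow> real) \<Rightarrow> (nat \<Rightarrow> real) \<Rightarrow> bool" where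
  "leO a b \<longleftrightarrow> (\<exists>C>0. \<forall>n\<ge>1. a n \<le> C * b n)"

definition LIP :: "(nat \<Rightarrow> real) \<Rightarrow> bool" where
  "LIP a \<longleftrightarrow> (\<exists>m::nat. m \<ge> 2 \<and> equivO (\<lambda>n. a (m * n)) a)"

definition bounded_jump :: "(nat \<Rightarrow> real) \<Rightarrow> bool" where
  "bounded_jump a \<longleftrightarrow> (\<exists>C>0. \<forall>n\<ge>1. a (n + 1) \<le> C * a n)"

definition piE :: "(nat \<Rightarrow> real) \<Rightarrow> ereal" where
  "piE a = Inf (ereal ` {t::real. t > 0 \<and> leO a (\<lambda>n. exp (t * real n))})"

end

theory Submission
  imports Defs
begin

lemma iter_bound:
  fixes a :: "nat \<Rightarrow> real"
  assumes m: "m \<ge> 2" and up: "\<forall>n\<ge>1. a (m*n) \<le> c2 * a n" and c2: "c2 > 0" and n: "n \<ge> 1"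
  shows "a (m^k*n) \<le> c2^k * a n"
proof (induction k)
  case 0 then show ?case by simp
next
  case (Suc k)
  have "m^k*n \<ge> 1" using m n by (simp add: Suc_le_eq)
  then have "a (m*(m^k*n)) \<le> c2 * a (m^k*n)" using up by blast
  also have "\<dots> \<le> c2 * (c2^k * a n)" using Suc c2 by simp
  finally show ?case by (simp add: mult.assoc)
qed

lemma growth:
  fixes a :: "nat \<Rightarrow> real"
  assumes sa: "seqO a" and m: "m \<ge> 2" and up: "\<forall>n\<ge>1. a (m*n) \<le> c2 * a n" and c2: "c2 > 0"
    and t: "t > 0"
  shows "\<exists>C>0. \<forall>n\<ge>1. a n \<le> C * exp (t * real n)"
proof -
  have nn: "\<And>n. n \<ge> 1 \<Longrightarrow> 0 \<le> a n" and mono: "\<And>p q. 1 \<le> p \<Longrightarrow> p \<le> q \<Longrightarrow> a p \<le> a q"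
    using sa unfolding seqO_def by auto
  define N :: nat where "N = nat (ceiling (2*c2/t)) + 1"
  have N1: "N \<ge> 1" unfolding N_def by simp
  have NN: "real N \<ge> 2*c2/t" unfolding N_def by linarith
  define C where "C = max 1 (a N)"
  have C: "C > 0" unfolding C_def by simp
  have "a n \<le> C * exp (t * real n)" if "n \<ge> 1" for n
    using that
  proof (induction n rule: less_induct)
    case (less n)
    show ?case
    proof (cases "n \<le> N")
      case True
      have "a n \<le> a N" using mono less.prems True by blast
      also have "\<dots> \<le> C" unfolding C_def by simp
      also have "\<dots> \<le> C * exp (t * real n)" using C t by simp
      finally show ?thesis .
    next
      case False
      define n' where "n' = (n - 1) div m + 1"
      have d: "(n-1) div m \<le> (n-1) div 2" using m by (simp add: div_le_mono2)
      have d2: "2 * ((n-1) div 2) \<le> n - 1" by simp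
      have h2: "2 * n' \<le> n + 1"
      proof -
        have gen: "\<And>x y k::nat. x \<le> y \<Longrightarrow> 2*y \<le> k - 1 \<Longrightarrow> 1 \<le> k \<Longrightarrow> 2*(x+1) \<le> k+1"
          by arith
        show ?thesis unfolding n'_def using gen[OF d d2 less.prems] .
      qed
      have hlt: "n' < n" using h2 False N1 by linarith
      have hn1: "n' \<ge> 1" unfolding n'_def by simp
      have hle: "n \<le> m * n'"
      proof -
        have e1: "m * ((n-1) div m) + (n-1) mod m = n - 1" by (rule mult_div_mod_eq)
        have e2: "(n-1) mod m < m" using m by simp
        have "n - 1 < m * ((n-1) div m + 1)"
          proof -
          have "m * ((n-1) div m + 1) = m * ((n-1) div m) + m" by (simp add: distrib_left)
          then show ?thesis using e1 e2 by linarith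
        qed
        then show ?thesis unfolding n'_def using less.prems by linarith
      qed
      have "a n \<le> a (m*n')" using mono less.prems hle by blast
      also have "\<dots> \<le> c2 * a n'" using up hn1 by blast
      also have "\<dots> \<le> c2 * (C * exp (t * real n'))" using less.IH hlt hn1 c2 by simp
      also have "\<dots> \<le> C * exp (t * real n)"
      proof -
        have rr: "real n - real n' \<ge> real N / 2" using h2 False by linarith
        have "c2 \<le> t * (real n - real n')"
        proof -
          have "t * (real N / 2) \<ge> c2" using NN t by (simp add: field_simps)
          moreover have "t * (real n - real n') \<ge> t * (real N / 2)" using rr t by simp
          ultimately show ?thesis by linarith
        qed
        also have "\<dots> \<le> exp (t * (real n - real n'))"
          using exp_ge_add_one_self[of "t * (real n - real n')"] by linarith
        finally have e: "c2 \<le> exp (t * (real n - real n'))" .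
        have "c2 * exp (t * real n') \<le> exp (t * (real n - real n')) * exp (t * real n')"
          using e by simp
        also have "\<dots> = exp (t * real n)"
        proof -
          have "t * (real n - real n') + t * real n' = t * real n" by (simp add: algebra_simps)
          then show ?thesis by (metis exp_add)
        qed
        finally have "c2 * exp (t * real n') \<le> exp (t * real n)" .
        then have "C * (c2 * exp (t * real n')) \<le> C * exp (t * real n)"
          using C by (intro mult_left_mono) auto
        then show ?thesis by (simp add: ac_simps)
      qed
      finally show ?thesis .
    qed
  qed
  then show ?thesis using C by blast
qed

theorem proposition2p7:
  fixes a :: "nat \<Rightarrow> real"
  assumes "seqO a" and "LIP a"
  shows "bounded_jump a \<and> (\<forall>m::nat. m \<ge> 2 \<longrightarrow> equivO (\<lambda>n. a (m * n)) a) \<and> piE a = 0"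
proof -
  have nn: "\<And>n. n \<ge> 1 \<Longrightarrow> 0 \<le> a n"
    using assms(1) unfolding seqO_def by blast
  have mono: "\<And>p q. 1 \<le> p \<Longrightarrow> p \<le> q \<Longrightarrow> a p \<le> a q"
    using assms(1) unfolding seqO_def by blast
  obtain m where m: "m \<ge> 2" and em: "equivO (\<lambda>n. a (m * n)) a"
    using assms(2) unfolding LIP_def by blast
  obtain c1 c2 where c: "0 < c1" "c1 \<le> c2" and
    h: "\<forall>n\<ge>1. c1 * a (m*n) \<le> a n \<and> a n \<le> c2 * a (m*n)"
  proof -
    have "\<exists>c1 c2. 0 < c1 \<and> c1 \<le> c2 \<and> (\<forall>n\<ge>1. c1 * a (m*n) \<le> a n \<and> a n \<le> c2 * a (m*n))"
      using em by (simp add: equivO_def)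
    then show ?thesis using that by blast
  qed
  define d where "d = 1 / c1"
  have up: "\<forall>n\<ge>1. a (m*n) \<le> d * a n"
  proof (intro allI impI)
    fix n :: nat assume "n \<ge> 1"
    then have "c1 * a (m*n) \<le> a n" using h by blast
    then show "a (m*n) \<le> d * a n" unfolding d_def using c(1) by (simp add: field_simps)
  qed
  have c2: "d > 0" unfolding d_def using c by simp
  have bj: "bounded_jump a"
  proof -
    have b: "a (n+1) \<le> d * a n" if n: "n \<ge> 1" for n
    proof -
      have "2 * n \<le> m * n" using m by simp
      then have "n + 1 \<le> m * n" using n by linarith
      then have "a (n+1) \<le> a (m*n)" using mono[of "n+1" "m*n"] by simp
      moreover have "a (m*n) \<le> d * a n" using up n by blast
      ultimately show "a (n+1) \<le> d * a n" by linarith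
    qed
    show ?thesis unfolding bounded_jump_def using b c2 by blast
  qed
  have eq: "equivO (\<lambda>n. a (m' * n)) a" if m': "m' \<ge> 2" for m'
  proof -
    have "m' < 2^m'" by (rule less_exp)
    also have "\<dots> \<le> m^m'" using m by (simp add: power_mono)
    finally have mk: "m' \<le> m^m'" by simp
    define K where "K = max 1 (d^m')"
    have K: "K \<ge> 1" unfolding K_def by simp
    have b: "(1/K) * a (m'*n) \<le> a n \<and> a n \<le> 1 * a (m'*n)" if n: "n \<ge> 1" for n
    proof
      have "n \<le> m'*n" using m' by simp
      then show "a n \<le> 1 * a (m'*n)" using mono[of n "m'*n"] n by simp
      have "1 \<le> m'*n" using m' n by (simp add: Suc_le_eq)
      moreover have "m'*n \<le> m^m'*n" using mk by simp
      ultimately have "a (m'*n) \<le> a (m^m'*n)" using mono by blast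
      also have "\<dots> \<le> d^m' * a n" using iter_bound[OF m up c2 n] .
      also have "\<dots> \<le> K * a n" unfolding K_def using nn n by (simp add: mult_right_mono)
      finally have "a (m'*n) \<le> K * a n" .
      then show "(1/K) * a (m'*n) \<le> a n" using K by (simp add: field_simps)
    qed
    have p: "(0::real) < 1/K" "1/K \<le> 1" using K by auto
    show ?thesis unfolding equivO_def using b p by blast
  qed
  have S: "{t::real. t > 0 \<and> leO a (\<lambda>n. exp (t * real n))} = {t. t > 0}"
    unfolding leO_def using growth[OF assms(1) m up c2] by auto
  have pi: "piE a = 0"
  proof -
    have "Inf (ereal ` {t::real. t > 0}) = 0"
    proof (rule antisym)
      show "0 \<le> Inf (ereal ` {t::real. t > 0})" by (rule Inf_greatest) auto
      show "Inf (ereal ` {t::real. t > 0}) \<le> 0"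
      proof (rule ereal_le_epsilon2)
        fix e :: real assume "e > 0"
        then have "Inf (ereal ` {t::real. t > 0}) \<le> ereal e" by (intro Inf_lower) auto
        then show "Inf (ereal ` {t::real. t > 0}) \<le> 0 + ereal e" by simp
      qed
    qed
    then show ?thesis unfolding piE_def S .
  qed
  show ?thesis using bj eq pi by blast
qed

end
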